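(* Let $k_0\ge1$, $(\pi^0,P^0)\in\Theta^{k_0}$, and for each $n$ let $\mathbf x_{n\times n}$ be the network part of a sample of size $n$ from the SBM with parameters $(\pi^0,P^0)$, this SBM having order $k_0$. Then $\hat k_{\mathrm{KT}}(\mathbf x_{n\times n})\notin(n,\infty)$ eventually almost surely as $n\to\infty$.
   Context: An adjacency matrix on $n$ nodes is a symmetric $\mathbf{x}\in\{0,1\}^{n\times n}$ with zero diagonal. For $k\ge1$ let $\Theta^k=\{(\pi,P):\pi\in(0,1]^k,\ \sum_{a=1}^k\pi_a=1,\ P\in[0,1]^{k\times k}\text{ symmetric}\}$, $[k]=\{1,\dots,k\}$. For $(\pi,P)\in\Theta^k$ the SBM is the law of $(\mathbf Z_n,\mathbf X_{n\times n})$, $\mathbf Z_n\in[k]^n$, with $\mathbb P_{\pi,P}(\mathbf z_n,\mathbf x)=\prod_{a=1}^k\pi_a^{n_a}\prod_{a,b=1}^kP_{a,b}^{O_{a,b}/2}(1-P_{a,b})^{(n_{a,b}-O_{a,b})/2}$ ($0^0=1$), $n_a=\sum_i 1\{z_i=a\}$, $n_{a,b}=n_an_b$ ($a\ne b$), $n_{a,a}=n_a(n_a-1)$, $O_{a,b}=\sum_{i,j}1\{z_i=a,z_j=b\}x_{ij}$; $\mathbb P_{\pi,P}(\mathbf x)=\sum_{\mathbf z_n\in[k]^n}\mathbb P_{\pi,P}(\mathbf z_n,\mathbf x)$. The order of an SBM is the smallest $k$ for which its law can be written in this form with parameters in $\Theta^k$. KT prior: $\nu_k(\pi,P)=\Big[\frac{\Gamma(k/2)}{\Gamma(1/2)^k}\prod_{a}\pi_a^{-1/2}\Big]\Big[\prod_{1\le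 a\le b\le k}\frac{1}{\Gamma(1/2)^2}P_{a,b}^{-1/2}(1-P_{a,b})^{-1/2}\Big]$; $\mathrm{KT}_k(\mathbf x)=\int_{\Theta^k}\mathbb P_{\pi,P}(\mathbf x)\nu_k(\pi,P)\,d\pi\,dP$. Estimator: $\hat k_{\mathrm{KT}}(\mathbf x)=\arg\max_{k\ge1}\{\log\mathrm{KT}_k(\mathbf x)-\mathrm{pen}(k,n)\}$, $\mathrm{pen}(k,n)=\sum_{i=1}^{k-1}\frac{i(i+2)+3+\epsilon}{2}\log n$ for fixed $\epsilon>0$. "Eventually almost surely" means: with probability one, for all sufficiently large $n$. *)

theory Defs
  imports "HOL-Probability.Probability"
begin

text \<open>Power with the convention 0^0 = 1 (Isabelle's powr has 0 powr 0 = 0).\<close>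
definition pw :: "real \<Rightarrow> real \<Rightarrow> real" where
  "pw b e = (if e = 0 then 1 else b powr e)"

definition adj_matrix :: "nat \<Rightarrow> (nat \<Rightarrow> nat \<Rightarrow> bool) \<Rightarrow> bool" where
  "adj_matrix n x \<longleftrightarrow> (\<forall>i<n. \<forall>j<n. x i j = x j i) \<and> (\<forall>i<n. \<not> x i i)"

definition Theta :: "nat \<Rightarrow> ((nat \<Rightarrow> real) \<times> (nat \<Rightarrow> nat \<Rightarrow> real)) set" where
  "Theta k = {(\<pi>, P). (\<forall>a\<in>{1..k}. 0 < \<pi> a \<and> \<pi> a \<le> 1) \<and> (\<Sum>a\<in>{1..k}. \<pi> a) = 1 \<and>
      (\<forall>a\<in>{1..k}. \<forall>b\<in>{1..k}. 0 \<le> P a b \<and> P a b \<le> 1 \<and> P a b = P b a)}"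

definition cnt_n :: "nat \<Rightarrow> (nat \<Rightarrow> nat) \<Rightarrow> nat \<Rightarrow> nat" where
  "cnt_n n z a = card {i. i < n \<and> z i = a}"

definition cnt_nn :: "nat \<Rightarrow> (nat \<Rightarrow> nat) \<Rightarrow> nat \<Rightarrow> nat \<Rightarrow> nat" where
  "cnt_nn n z a b = (if a \<noteq> b then cnt_n n z a * cnt_n n z b
                     else cnt_n n z a * (cnt_n n z a - 1))"

definition cnt_O :: "nat \<Rightarrow> (nat \<Rightarrow> nat) \<Rightarrow> (nat \<Rightarrow> nat \<Rightarrow> bool) \<Rightarrow> nat \<Rightarrow> nat \<Rightarrow> nat" where
  "cnt_O n z x a b = card {(i, j). i < n \<and> j < n \<and> z i = a \<and> z j = b \<and> x i j}"

definition sbm_joint :: "nat \<Rightarrow> (nat \<Rightarrow> real) \<Rightarrow> (nat \<Rightarrow> nat \<Rightarrow> real) \<Rightarrow> nat \<Rightarrow>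
    (nat \<Rightarrow> nat) \<Rightarrow> (nat \<Rightarrow> nat \<Rightarrow> bool) \<Rightarrow> real" where
  "sbm_joint k \<pi> P n z x =
     (\<Prod>a\<in>{1..k}. \<pi> a ^ cnt_n n z a) *
     (\<Prod>a\<in>{1..k}. \<Prod>b\<in>{1..k}.
        pw (P a b) (real (cnt_O n z x a b) / 2) *
        pw (1 - P a b) ((real (cnt_nn n z a b) - real (cnt_O n z x a b)) / 2))"

definition sbm_prob :: "nat \<Rightarrow> (nat \<Rightarrow> real) \<Rightarrow> (nat \<Rightarrow> nat \<Rightarrow> real) \<Rightarrow> nat \<Rightarrow>
    (nat \<Rightarrow> nat \<Rightarrow> bool) \<Rightarrow> real" where
  "sbm_prob k \<pi> P n x = (\<Sum>z\<in>PiE {0..<n} (\<lambda>_. {1..k}). sbm_joint k \<pi> P n z x)"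

definition sbm_order :: "nat \<Rightarrow> (nat \<Rightarrow> real) \<Rightarrow> (nat \<Rightarrow> nat \<Rightarrow> real) \<Rightarrow> nat" where
  "sbm_order k \<pi> P = (LEAST k'. k' \<ge> 1 \<and> (\<exists>\<pi>' P'. (\<pi>', P') \<in> Theta k' \<and>
      (\<forall>n x. adj_matrix n x \<longrightarrow> sbm_prob k' \<pi>' P' n x = sbm_prob k \<pi> P n x)))"

text \<open>Coordinates for the KT integral: free simplex coordinates pi_1..pi_{k-1}
  (pi_k = 1 - sum), and P_{a,b} for 1 <= a <= b <= k.\<close>
definition upper_pairs :: "nat \<Rightarrow> (nat \<times> nat) set" where
  "upper_pairs k = {(a, b). 1 \<le> a \<and> a \<le> b \<and> b \<le> k}"

definition pi_of :: "nat \<Rightarrow> (nat \<Rightarrow> real) \<Rightarrow> nat \<Rightarrow> real" where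
  "pi_of k f a = (if a < k then f a else 1 - (\<Sum>c\<in>{1..<k}. f c))"

definition P_of :: "((nat \<times> nat) \<Rightarrow> real) \<Rightarrow> nat \<Rightarrow> nat \<Rightarrow> real" where
  "P_of g a b = g (min a b, max a b)"

definition KT_measure :: "nat \<Rightarrow> ((nat \<Rightarrow> real) \<times> ((nat \<times> nat) \<Rightarrow> real)) measure" where
  "KT_measure k = (PiM {1..<k} (\<lambda>_. lborel)) \<Otimes>\<^sub>M (PiM (upper_pairs k) (\<lambda>_. lborel))"

definition KT_prior :: "nat \<Rightarrow> (nat \<Rightarrow> real) \<Rightarrow> (nat \<Rightarrow> nat \<Rightarrow> real) \<Rightarrow> real" where
  "KT_prior k \<pi> P =
     (Gamma (real k / 2) / Gamma (1/2) ^ k * (\<Prod>a\<in>{1..k}. \<pi> a powr (-1/2))) *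
     (\<Prod>(a, b)\<in>upper_pairs k. 1 / Gamma (1/2) ^ 2 * P a b powr (-1/2) * (1 - P a b) powr (-1/2))"

definition KT :: "nat \<Rightarrow> nat \<Rightarrow> (nat \<Rightarrow> nat \<Rightarrow> bool) \<Rightarrow> real" where
  "KT k n x = enn2real (\<integral>\<^sup>+ y. ennreal
      (if (pi_of k (fst y), P_of (snd y)) \<in> Theta k
       then sbm_prob k (pi_of k (fst y)) (P_of (snd y)) n x * KT_prior k (pi_of k (fst y)) (P_of (snd y))
       else 0) \<partial>KT_measure k)"

definition pen :: "real \<Rightarrow> nat \<Rightarrow> nat \<Rightarrow> real" where
  "pen \<epsilon> k n = (\<Sum>i\<in>{1..<k}. (real (i * (i + 2)) + 3 + \<epsilon>) / 2 * ln (real n))"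

definition KT_crit :: "real \<Rightarrow> nat \<Rightarrow> (nat \<Rightarrow> nat \<Rightarrow> bool) \<Rightarrow> nat \<Rightarrow> real" where
  "KT_crit \<epsilon> n x k = ln (KT k n x) - pen \<epsilon> k n"

definition is_khat_KT :: "real \<Rightarrow> nat \<Rightarrow> (nat \<Rightarrow> nat \<Rightarrow> bool) \<Rightarrow> nat \<Rightarrow> bool" where
  "is_khat_KT \<epsilon> n x k = is_arg_max (KT_crit \<epsilon> n x) (\<lambda>k'. k' \<ge> 1) k"

end

theory Submission
  imports Defs
begin


lemma powr_mhalf: "(t::real) \<ge> 0 \<Longrightarrow> t powr (-1/2) = 1 / sqrt t"
proof (cases "t = 0")
  case False
  assume "t \<ge> 0"
  then have "t > 0" using False by simp
  have "t powr (-1/2) = t powr (-(1/2))" by simp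
  also have "\<dots> = 1 / t powr (1/2)" by (simp add: powr_minus_divide)
  also have "\<dots> = 1 / sqrt t" using \<open>t > 0\<close> by (simp add: powr_half_sqrt)
  finally show ?thesis .
qed simp

lemma int_sqrt_inv:
  assumes "s > 0"
  shows "(\<integral>\<^sup>+ t. ennreal (t powr (-1/2)) * indicator {0..s} t \<partial>lborel) = ennreal (2 * sqrt s)"
proof -
  have "((\<lambda>x. x powr (-1/2)) has_integral (s powr (-1/2+1) / (-1/2+1))) {0..s}"
    by (rule has_integral_powr_from_0) (use assms in auto)
  then have "(\<integral>\<^sup>+ t. ennreal (indicator {0..s} t * t powr (-1/2)) \<partial>lborel) = ennreal (s powr (-1/2+1) / (-1/2+1))"
    by (intro nn_integral_has_integral_lebesgue) auto
  moreover have "s powr (-1/2+1) / (-1/2+1) = 2 * sqrt s"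
    using assms by (simp add: powr_half_sqrt)
  moreover have "\<And>t. ennreal (indicator {0..s} t * t powr (-1/2)) = ennreal (t powr (-1/2)) * indicator {0..s} t"
    by (simp add: indicator_def)
  ultimately show ?thesis by (simp add: mult.commute)
qed

lemma int_sqrt_inv_refl:
  assumes "s > 0"
  shows "(\<integral>\<^sup>+ t. ennreal ((s - t) powr (-1/2)) * indicator {0..s} t \<partial>lborel) = ennreal (2 * sqrt s)"
proof -
  have "(\<integral>\<^sup>+ t. ennreal (t powr (-1/2)) * indicator {0..s} t \<partial>lborel) =
     ennreal \<bar>-1\<bar> * (\<integral>\<^sup>+ t. ennreal ((s + (-1) * t) powr (-1/2)) * indicator {0..s} (s + (-1) * t) \<partial>lborel)"
    by (rule nn_integral_real_affine) auto
  moreover have "\<And>t. indicator {0..s} (s + (-1) * t) = (indicator {0..s} t :: ennreal)"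
    by (auto simp: indicator_def)
  ultimately show ?thesis using int_sqrt_inv[OF assms] by simp
qed

lemma J_pointwise:
  assumes "0 \<le> y" "y \<le> s"
  shows "y powr (-1/2) * (s-y) powr (-1/2) \<le> (sqrt 2 / sqrt s) * (y powr (-1/2) + (s-y) powr (-1/2))"
proof (cases "y = 0 \<or> y = s")
  case True then show ?thesis using assms by (auto intro!: mult_nonneg_nonneg add_nonneg_nonneg)
next
  case False
  then have y: "0 < y" "y < s" using assms by auto
  have e1: "y powr (-1/2) = 1 / sqrt y" "(s-y) powr (-1/2) = 1 / sqrt (s - y)"
    using y powr_mhalf[of y] powr_mhalf[of "s - y"] by auto
  have sq: "sqrt s \<le> sqrt 2 * sqrt u" if "s \<le> 2 * u" for u
    by (metis real_sqrt_le_iff real_sqrt_mult that)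
  show ?thesis
  proof (cases "y \<le> s/2")
    case True
    have "1 / sqrt (s - y) \<le> sqrt 2 / sqrt s"
      using sq[of "s - y"] True y by (simp add: field_simps)
    then have "1 / sqrt y * (1 / sqrt (s - y)) \<le> 1 / sqrt y * (sqrt 2 / sqrt s)"
      using y by (intro mult_left_mono) auto
    also have "\<dots> \<le> (sqrt 2 / sqrt s) * (1 / sqrt y + 1 / sqrt (s - y))"
      using y by (simp add: field_simps)
    finally show ?thesis using e1 by simp
  next
    case False
    have "1 / sqrt y \<le> sqrt 2 / sqrt s"
      using sq[of "y"] False y by (simp add: field_simps)
    then have "1 / sqrt y * (1 / sqrt (s - y)) \<le> (sqrt 2 / sqrt s) * (1 / sqrt (s - y))"
      using y by (intro mult_right_mono) auto
    also have "\<dots> \<le> (sqrt 2 / sqrt s) * (1 / sqrt y + 1 / sqrt (s - y))"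
      using y by (simp add: field_simps)
    finally show ?thesis using e1 by simp
  qed
qed

lemma J_bound:
  "(\<integral>\<^sup>+ y. ennreal (y powr (-1/2) * (s-y) powr (-1/2)) * indicator {0..s} y \<partial>lborel) \<le> 6"
proof (cases "s > 0")
  case False
  have "(\<lambda>y. ennreal (y powr (-1/2) * (s-y) powr (-1/2)) * indicator {0..s} y) = (\<lambda>_. 0)"
  proof
    fix y show "ennreal (y powr (-1/2) * (s-y) powr (-1/2)) * indicator {0..s} y = 0"
    proof (cases "y \<in> {0..s}")
      case True then have "y = 0" using False by auto
      then show ?thesis by simp
    qed simp
  qed
  then show ?thesis by simp
next
  case True
  let ?c = "sqrt 2 / sqrt s"
  have "(\<integral>\<^sup>+ y. ennreal (y powr (-1/2) * (s-y) powr (-1/2)) * indicator {0..s} y \<partial>lborel)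
     \<le> (\<integral>\<^sup>+ y. ennreal ?c * (ennreal (y powr (-1/2)) * indicator {0..s} y + ennreal ((s - y) powr (-1/2)) * indicator {0..s} y) \<partial>lborel)"
  proof (intro nn_integral_mono)
    fix y
    show "ennreal (y powr (-1/2) * (s-y) powr (-1/2)) * indicator {0..s} y
       \<le> ennreal ?c * (ennreal (y powr (-1/2)) * indicator {0..s} y + ennreal ((s - y) powr (-1/2)) * indicator {0..s} y)"
    proof (cases "y \<in> {0..s}")
      case True
      have "0 \<le> s" using True by auto
      from True have "ennreal (y powr (-1/2) * (s-y) powr (-1/2)) \<le> ennreal (?c * (y powr (-1/2) + (s-y) powr (-1/2)))"
        using J_pointwise[of y s] by (intro ennreal_leI) auto
      also have "\<dots> = ennreal ?c * ennreal (y powr (-1/2) + (s-y) powr (-1/2))"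
        using \<open>0 \<le> s\<close> by (intro ennreal_mult) (auto intro!: divide_nonneg_nonneg add_nonneg_nonneg)
      also have "\<dots> = ennreal ?c * (ennreal (y powr (-1/2)) + ennreal ((s - y) powr (-1/2)))"
        by (simp add: ennreal_plus)
      finally show ?thesis using True by simp
    qed simp
  qed
  also have "\<dots> = ennreal ?c * ((\<integral>\<^sup>+ y. ennreal (y powr (-1/2)) * indicator {0..s} y \<partial>lborel) + (\<integral>\<^sup>+ y. ennreal ((s - y) powr (-1/2)) * indicator {0..s} y \<partial>lborel))"
    by (subst nn_integral_cmult) (auto simp: nn_integral_add)
  also have "\<dots> = ennreal ?c * (ennreal (2 * sqrt s) + ennreal (2 * sqrt s))"
    by (simp only: int_sqrt_inv[OF True] int_sqrt_inv_refl[OF True])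
  also have "\<dots> = ennreal ?c * ennreal (4 * sqrt s)"
    using True by (simp flip: ennreal_plus)
  also have "\<dots> = ennreal (?c * (4 * sqrt s))"
    using True by (simp flip: ennreal_mult)
  also have "?c * (4 * sqrt s) = 4 * sqrt 2" using True by simp
  also have "ennreal (4 * sqrt 2) \<le> 6"
  proof -
    have "sqrt 2 \<le> 3/2" by (rule real_le_lsqrt) (auto simp: power2_eq_square)
    then have "4 * sqrt 2 \<le> (6::real)" by simp
    from ennreal_leI[OF this] show ?thesis by simp
  qed
  finally show ?thesis .
qed



interpretation PSF: product_sigma_finite "\<lambda>_::'i. lborel :: real measure"
  by (simp add: product_sigma_finite_def lborel.sigma_finite_measure_axioms)

definition phr :: "real \<Rightarrow> real" where
  "phr t = indicator {0..1} t * t powr (-1/2)"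

lemma phr_nonneg: "phr t \<ge> 0" by (simp add: phr_def)

lemma int_phr: "(\<integral>\<^sup>+ t. ennreal (phr t) \<partial>lborel) = 2"
proof -
  have "\<And>t. ennreal (phr t) = ennreal (t powr (-1/2)) * indicator {0..1} t"
    by (simp add: phr_def indicator_def)
  then show ?thesis using int_sqrt_inv[of 1] by simp
qed

lemma PiM_phr:
  assumes "finite I"
  shows "(\<integral>\<^sup>+ f. (\<Prod>a\<in>I. ennreal (phr (f a))) \<partial>PiM I (\<lambda>_. lborel)) = 2 ^ card I"
proof -
  have "(\<integral>\<^sup>+ f. (\<Prod>a\<in>I. ennreal (phr (f a))) \<partial>PiM I (\<lambda>_. lborel)) = (\<Prod>a\<in>I. \<integral>\<^sup>+ t. ennreal (phr t) \<partial>lborel)"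
    by (rule PSF.product_nn_integral_prod[OF assms]) (simp add: phr_def)
  then show ?thesis by (simp add: int_phr)
qed

definition Gf :: "nat \<Rightarrow> (nat \<Rightarrow> real) \<Rightarrow> ennreal" where
  "Gf k f = ennreal ((\<Prod>a\<in>{1..<k}. phr (f a)) * phr (1 - (\<Sum>c\<in>{1..<k}. f c)))"

lemma Gf_meas: "Gf k \<in> borel_measurable (PiM {1..<k} (\<lambda>_. lborel))"
  unfolding Gf_def phr_def by measurable

lemma G_int:
  assumes "k \<ge> 2"
  shows "(\<integral>\<^sup>+ f. Gf k f \<partial>PiM {1..<k} (\<lambda>_. lborel)) \<le> 6 * 2 ^ (k - 2)"
proof -
  let ?I = "{1..<k-1}"
  have ins: "{1..<k} = insert (k-1) ?I" using assms by auto
  have "(\<integral>\<^sup>+ f. Gf k f \<partial>PiM {1..<k} (\<lambda>_. lborel)) =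
      (\<integral>\<^sup>+ f. (\<integral>\<^sup>+ y. Gf k (f(k-1 := y)) \<partial>lborel) \<partial>PiM ?I (\<lambda>_. lborel))"
    using Gf_meas[of k] unfolding ins by (intro PSF.product_nn_integral_insert) auto
  also have "\<dots> \<le> (\<integral>\<^sup>+ f. ennreal (\<Prod>a\<in>?I. phr (f a)) * 6 \<partial>PiM ?I (\<lambda>_. lborel))"
  proof (intro nn_integral_mono)
    fix f :: "nat \<Rightarrow> real"
    let ?s = "1 - (\<Sum>c\<in>?I. f c)"
    have eq: "Gf k (f(k-1 := y)) = ennreal (\<Prod>a\<in>?I. phr (f a)) * ennreal (phr y * phr (?s - y))" for y
    proof -
      have "(\<Prod>a\<in>{1..<k}. phr ((f(k-1 := y)) a)) = phr y * (\<Prod>a\<in>?I. phr (f a))"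
        unfolding ins by (subst prod.insert) (auto intro!: prod.cong)
      moreover have "(\<Sum>c\<in>{1..<k}. (f(k-1 := y)) c) = y + (\<Sum>c\<in>?I. f c)"
        unfolding ins by (subst sum.insert) (auto intro!: sum.cong)
      ultimately show ?thesis
        unfolding Gf_def by (simp add: ennreal_mult[symmetric] prod_nonneg phr_nonneg algebra_simps diff_diff_eq)
    qed
    have pt: "ennreal (phr y * phr (?s - y)) \<le> ennreal (y powr (-1/2) * (?s-y) powr (-1/2)) * indicator {0..?s} y" for y
    proof (cases "0 \<le> y \<and> y \<le> 1 \<and> 0 \<le> ?s - y \<and> ?s - y \<le> 1")
      case True
      then show ?thesis by (simp add: phr_def indicator_def)
    next
      case False
      then have "phr y * phr (?s - y) = 0" by (auto simp: phr_def indicator_def)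
      then have "ennreal (phr y * phr (?s - y)) = 0" by (metis ennreal_0)
      then show ?thesis by simp
    qed
    have "(\<integral>\<^sup>+ y. Gf k (f(k-1 := y)) \<partial>lborel) = ennreal (\<Prod>a\<in>?I. phr (f a)) * (\<integral>\<^sup>+ y. ennreal (phr y * phr (?s - y)) \<partial>lborel)"
      unfolding eq by (rule nn_integral_cmult) (simp add: phr_def)
    also have "\<dots> \<le> ennreal (\<Prod>a\<in>?I. phr (f a)) * (\<integral>\<^sup>+ y. ennreal (y powr (-1/2) * (?s-y) powr (-1/2)) * indicator {0..?s} y \<partial>lborel)"
      by (intro mult_left_mono nn_integral_mono pt) auto
    also have "\<dots> \<le> ennreal (\<Prod>a\<in>?I. phr (f a)) * 6"
      by (intro mult_left_mono J_bound) auto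
    finally show "(\<integral>\<^sup>+ y. Gf k (f(k-1 := y)) \<partial>lborel) \<le> ennreal (\<Prod>a\<in>?I. phr (f a)) * 6" .
  qed
  also have "\<dots> = (\<integral>\<^sup>+ f. (\<Prod>a\<in>?I. ennreal (phr (f a))) \<partial>PiM ?I (\<lambda>_. lborel)) * 6"
    by (subst nn_integral_multc) (auto simp: prod_ennreal phr_nonneg phr_def)
  also have "\<dots> = 2 ^ card ?I * 6" by (simp add: PiM_phr)
  also have "card ?I = k - 2" by simp
  finally show ?thesis by (simp add: mult.commute)
qed

definition hr :: "real \<Rightarrow> real" where
  "hr t = indicator {0..1} t * (t powr (-1/2) * (1 - t) powr (-1/2)) / pi"

lemma hr_nonneg: "hr t \<ge> 0" by (simp add: hr_def)

lemma int_hr: "(\<integral>\<^sup>+ t. ennreal (hr t) \<partial>lborel) \<le> 2"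
proof -
  have "\<And>t. ennreal (hr t) = ennreal (1/pi) * (ennreal (t powr (-1/2) * (1 - t) powr (-1/2)) * indicator {0..1} t)"
    by (simp add: hr_def indicator_def ennreal_mult[symmetric])
  then have "(\<integral>\<^sup>+ t. ennreal (hr t) \<partial>lborel) = ennreal (1/pi) * (\<integral>\<^sup>+ t. ennreal (t powr (-1/2) * (1 - t) powr (-1/2)) * indicator {0..1} t \<partial>lborel)"
    by (simp add: nn_integral_cmult)
  also have "\<dots> \<le> ennreal (1/pi) * 6"
    by (intro mult_left_mono J_bound) auto
  also have "\<dots> = ennreal (6/pi)"
    by (subst ennreal_numeral[symmetric], subst ennreal_mult[symmetric]) auto
  also have "\<dots> \<le> 2"
  proof -
    have "6/pi \<le> (2::real)" using pi_gt3 by (simp add: field_simps)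
    from ennreal_leI[OF this] show ?thesis by simp
  qed
  finally show ?thesis .
qed

lemma PiM_hr:
  assumes "finite K"
  shows "(\<integral>\<^sup>+ g. (\<Prod>p\<in>K. ennreal (hr (g p))) \<partial>PiM K (\<lambda>_. lborel)) \<le> 2 ^ card K"
proof -
  have "(\<integral>\<^sup>+ g. (\<Prod>p\<in>K. ennreal (hr (g p))) \<partial>PiM K (\<lambda>_. lborel)) = (\<Prod>p\<in>K. \<integral>\<^sup>+ t. ennreal (hr t) \<partial>lborel)"
    by (rule PSF.product_nn_integral_prod[OF assms]) (simp add: hr_def)
  also have "\<dots> \<le> (\<Prod>p\<in>K. 2)"
    by (intro prod_mono_ennreal) (auto simp: int_hr)
  finally show ?thesis by simp
qed




lemma cnt_nn_card:
  "cnt_nn n z a b = card {(i,j). i < n \<and> j < n \<and> i \<noteq> j \<and> z i = a \<and> z j = b}"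
proof -
  let ?S = "\<lambda>a. {i. i < n \<and> z i = a}"
  show ?thesis
  proof (cases "a = b")
    case False
    have "{(i,j). i < n \<and> j < n \<and> i \<noteq> j \<and> z i = a \<and> z j = b} = ?S a \<times> ?S b"
      using False by auto
    then show ?thesis using False by (simp add: cnt_nn_def cnt_n_def card_cartesian_product)
  next
    case True
    have eq: "{(i,j). i < n \<and> j < n \<and> i \<noteq> j \<and> z i = a \<and> z j = b} = ?S a \<times> ?S a - (\<lambda>i. (i,i)) ` ?S a"
      using True by auto
    have "card (?S a \<times> ?S a - (\<lambda>i. (i,i)) ` ?S a) = card (?S a) * card (?S a) - card ((\<lambda>i. (i,i)) ` ?S a)"
      by (subst card_Diff_subset) (auto simp: card_cartesian_product)
    also have "card ((\<lambda>i. (i,i)) ` ?S a) = card (?S a)"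
      by (rule card_image) (auto simp: inj_on_def)
    finally show ?thesis using True eq by (simp add: cnt_nn_def cnt_n_def diff_mult_distrib2)
  qed
qed

lemma cnt_O_card:
  assumes "adj_matrix n x"
  shows "cnt_O n z x a b = card {(i,j). i < n \<and> j < n \<and> i \<noteq> j \<and> z i = a \<and> z j = b \<and> x i j}"
proof -
  have "{(i, j). i < n \<and> j < n \<and> z i = a \<and> z j = b \<and> x i j} = {(i,j). i < n \<and> j < n \<and> i \<noteq> j \<and> z i = a \<and> z j = b \<and> x i j}"
    using assms by (auto simp: adj_matrix_def)
  then show ?thesis by (simp add: cnt_O_def)
qed

lemma finite_pairs_n: "finite {(i,j). i < n \<and> j < (n::nat) \<and> P i j}"
  by (rule finite_subset[of _ "{..<n} \<times> {..<n}"]) auto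

lemma cnt_O_le:
  assumes "adj_matrix n x"
  shows "cnt_O n z x a b \<le> cnt_nn n z a b"
  unfolding cnt_O_card[OF assms] cnt_nn_card
  by (rule card_mono[OF finite_pairs_n]) auto

lemma cnt_nn_minus_O:
  assumes "adj_matrix n x"
  shows "cnt_nn n z a b - cnt_O n z x a b = card {(i,j). i < n \<and> j < n \<and> i \<noteq> j \<and> z i = a \<and> z j = b \<and> \<not> x i j}"
proof -
  have "{(i,j). i < n \<and> j < n \<and> i \<noteq> j \<and> z i = a \<and> z j = b \<and> \<not> x i j} =
     {(i,j). i < n \<and> j < n \<and> i \<noteq> j \<and> z i = a \<and> z j = b} - {(i,j). i < n \<and> j < n \<and> i \<noteq> j \<and> z i = a \<and> z j = b \<and> x i j}"
    by auto
  then show ?thesis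
    unfolding cnt_O_card[OF assms] cnt_nn_card
    by (simp add: card_Diff_subset finite_pairs_n subset_iff)
qed

lemma pw_nonneg: "b \<ge> 0 \<Longrightarrow> pw b e \<ge> 0" by (simp add: pw_def)

lemma pw_le1: "0 \<le> b \<Longrightarrow> b \<le> 1 \<Longrightarrow> 0 \<le> e \<Longrightarrow> pw b e \<le> 1"
  by (auto simp: pw_def powr_le1)

lemma joint_le1:
  assumes th: "(\<pi>, P) \<in> Theta k" and adj: "adj_matrix n x"
  shows "sbm_joint k \<pi> P n z x \<le> 1" "sbm_joint k \<pi> P n z x \<ge> 0"
proof -
  have pi: "\<And>a. a \<in> {1..k} \<Longrightarrow> 0 < \<pi> a \<and> \<pi> a \<le> 1" and PP: "\<And>a b. a \<in> {1..k} \<Longrightarrow> b \<in> {1..k} \<Longrightarrow> 0 \<le> P a b \<and> P a b \<le> 1"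
    using th by (auto simp: Theta_def)
  have e: "0 \<le> (real (cnt_nn n z a b) - real (cnt_O n z x a b)) / 2" for a b
    using cnt_O_le[OF adj, of z a b] by simp
  have f1: "0 \<le> (\<Prod>a\<in>{1..k}. \<pi> a ^ cnt_n n z a)" "(\<Prod>a\<in>{1..k}. \<pi> a ^ cnt_n n z a) \<le> 1"
  proof -
    have p0: "\<And>a. a \<in> {1..k} \<Longrightarrow> 0 \<le> \<pi> a ^ cnt_n n z a" and p1: "\<And>a. a \<in> {1..k} \<Longrightarrow> \<pi> a ^ cnt_n n z a \<le> 1"
      using pi by (auto simp add: less_imp_le power_le_one)
    show "0 \<le> (\<Prod>a\<in>{1..k}. \<pi> a ^ cnt_n n z a)" "(\<Prod>a\<in>{1..k}. \<pi> a ^ cnt_n n z a) \<le> 1"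
      using p0 p1 by (auto intro!: prod_nonneg prod_le_1)
  qed
  have f2: "0 \<le> (\<Prod>a\<in>{1..k}. \<Prod>b\<in>{1..k}. pw (P a b) (real (cnt_O n z x a b) / 2) *
        pw (1 - P a b) ((real (cnt_nn n z a b) - real (cnt_O n z x a b)) / 2))"
     "(\<Prod>a\<in>{1..k}. \<Prod>b\<in>{1..k}. pw (P a b) (real (cnt_O n z x a b) / 2) *
        pw (1 - P a b) ((real (cnt_nn n z a b) - real (cnt_O n z x a b)) / 2)) \<le> 1"
    using PP e by (auto intro!: prod_nonneg prod_le_1 mult_nonneg_nonneg mult_le_one pw_nonneg pw_le1)
  show "sbm_joint k \<pi> P n z x \<le> 1" "sbm_joint k \<pi> P n z x \<ge> 0"
    unfolding sbm_joint_def using f1 f2 by (auto intro: mult_le_one)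
qed

lemma sbm_prob_le:
  assumes th: "(\<pi>, P) \<in> Theta k" and adj: "adj_matrix n x"
  shows "sbm_prob k \<pi> P n x \<le> real k ^ n"
proof -
  have "sbm_prob k \<pi> P n x \<le> (\<Sum>z\<in>PiE {0..<n} (\<lambda>_. {1..k}). 1)"
    unfolding sbm_prob_def by (intro sum_mono joint_le1[OF th adj])
  also have "\<dots> = real k ^ n" by (simp add: card_PiE)
  finally show ?thesis .
qed



definition Cg :: "nat \<Rightarrow> real" where "Cg k = Gamma (real k / 2) / Gamma (1/2) ^ k"

definition Gr :: "nat \<Rightarrow> (nat \<Rightarrow> real) \<Rightarrow> real" where
  "Gr k f = (\<Prod>a\<in>{1..<k}. phr (f a)) * phr (1 - (\<Sum>c\<in>{1..<k}. f c))"

definition Hr :: "nat \<Rightarrow> (nat \<times> nat \<Rightarrow> real) \<Rightarrow> real" where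
  "Hr k g = (\<Prod>p\<in>upper_pairs k. hr (g p))"

definition Hf :: "nat \<Rightarrow> (nat \<times> nat \<Rightarrow> real) \<Rightarrow> ennreal" where
  "Hf k g = (\<Prod>p\<in>upper_pairs k. ennreal (hr (g p)))"

lemma finite_upper_pairs: "finite (upper_pairs k)"
  by (rule finite_subset[of _ "{1..k} \<times> {1..k}"]) (auto simp: upper_pairs_def)

lemma card_upper_pairs: "card (upper_pairs k) \<le> k * k"
proof -
  have "card (upper_pairs k) \<le> card ({1..k} \<times> {1..k})"
    by (rule card_mono) (auto simp: upper_pairs_def)
  then show ?thesis by (simp add: card_cartesian_product)
qed

lemma Hf_meas: "Hf k \<in> borel_measurable (PiM (upper_pairs k) (\<lambda>_. lborel))"
  unfolding Hf_def hr_def by measurable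

lemma Cg_nonneg: "k \<ge> 1 \<Longrightarrow> Cg k \<ge> 0"
  unfolding Cg_def by (intro divide_nonneg_nonneg less_imp_le Gamma_real_pos) auto

lemma Gr_nonneg: "Gr k f \<ge> 0" unfolding Gr_def by (intro mult_nonneg_nonneg prod_nonneg phr_nonneg)
lemma Hr_nonneg: "Hr k g \<ge> 0" unfolding Hr_def by (intro prod_nonneg hr_nonneg)

lemma prior_eq:
  assumes th: "(pi_of k f, P_of g) \<in> Theta k" and k: "k \<ge> 1"
  shows "KT_prior k (pi_of k f) (P_of g) = Cg k * Gr k f * Hr k g"
proof -
  have pi: "\<And>a. a \<in> {1..k} \<Longrightarrow> 0 < pi_of k f a \<and> pi_of k f a \<le> 1"
   and PP: "\<And>a b. a \<in> {1..k} \<Longrightarrow> b \<in> {1..k} \<Longrightarrow> 0 \<le> P_of g a b \<and> P_of g a b \<le> 1"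
    using th by (auto simp: Theta_def)
  have ins: "{1..k} = insert k {1..<k}" using k by auto
  have A: "(\<Prod>a\<in>{1..k}. pi_of k f a powr (-1/2)) = Gr k f"
  proof -
    have "(\<Prod>a\<in>{1..k}. pi_of k f a powr (-1/2)) = pi_of k f k powr (-1/2) * (\<Prod>a\<in>{1..<k}. pi_of k f a powr (-1/2))"
      unfolding ins by simp
    also have "pi_of k f k powr (-1/2) = phr (1 - (\<Sum>c\<in>{1..<k}. f c))"
      using pi[of k] k by (simp add: pi_of_def phr_def indicator_def)
    also have "(\<Prod>a\<in>{1..<k}. pi_of k f a powr (-1/2)) = (\<Prod>a\<in>{1..<k}. phr (f a))"
    proof (rule prod.cong)
      fix a assume a: "a \<in> {1..<k}"
      then have "0 < f a \<and> f a \<le> 1" using pi[of a] by (simp add: pi_of_def)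
      then show "pi_of k f a powr (-1/2) = phr (f a)"
        using a by (simp add: pi_of_def phr_def indicator_def)
    qed simp
    finally show ?thesis by (simp add: Gr_def mult.commute)
  qed
  have B: "(\<Prod>(a, b)\<in>upper_pairs k. 1 / Gamma (1/2) ^ 2 * P_of g a b powr (-1/2) * (1 - P_of g a b) powr (-1/2)) = Hr k g"
    unfolding Hr_def
  proof (rule prod.cong)
    fix p assume p: "p \<in> upper_pairs k"
    obtain a b where ab: "p = (a,b)" "1 \<le> a" "a \<le> b" "b \<le> k" using p by (auto simp: upper_pairs_def)
    then have "P_of g a b = g p" by (simp add: P_of_def)
    moreover have "0 \<le> P_of g a b \<and> P_of g a b \<le> 1" using PP[of a b] ab by auto
    ultimately show "(case p of (a, b) \<Rightarrow> 1 / Gamma (1/2) ^ 2 * P_of g a b powr (-1/2) * (1 - P_of g a b) powr (-1/2)) = hr (g p)"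
      using ab by (simp add: hr_def indicator_def Gamma_one_half_real)
  qed simp
  show ?thesis unfolding KT_prior_def A B Cg_def by simp
qed

lemma KT_upper:
  assumes k: "k \<ge> 2" and adj: "adj_matrix n x"
  shows "KT k n x \<le> real k ^ n * Cg k * (6 * 2 ^ (k - 2)) * 2 ^ card (upper_pairs k)"
proof -
  let ?M1 = "PiM {1..<k} (\<lambda>_. lborel :: real measure)"
  let ?M2 = "PiM (upper_pairs k) (\<lambda>_. lborel :: real measure)"
  let ?c = "real k ^ n * Cg k"
  have c0: "?c \<ge> 0" using Cg_nonneg[of k] k by simp
  define F where "F y = ennreal (if (pi_of k (fst y), P_of (snd y)) \<in> Theta k
       then sbm_prob k (pi_of k (fst y)) (P_of (snd y)) n x * KT_prior k (pi_of k (fst y)) (P_of (snd y))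
       else 0)" for y :: "(nat \<Rightarrow> real) \<times> (nat \<times> nat \<Rightarrow> real)"
  have Fle: "F y \<le> ennreal ?c * (Gf k (fst y) * Hf k (snd y))" for y
  proof (cases "(pi_of k (fst y), P_of (snd y)) \<in> Theta k")
    case True
    have pr: "KT_prior k (pi_of k (fst y)) (P_of (snd y)) = Cg k * Gr k (fst y) * Hr k (snd y)"
      using prior_eq[OF True] k by simp
    have p0: "0 \<le> Cg k * Gr k (fst y) * Hr k (snd y)"
      using Cg_nonneg[of k] k Gr_nonneg Hr_nonneg by simp
    have "sbm_prob k (pi_of k (fst y)) (P_of (snd y)) n x * KT_prior k (pi_of k (fst y)) (P_of (snd y))
        \<le> real k ^ n * (Cg k * Gr k (fst y) * Hr k (snd y))"
      unfolding pr by (intro mult_right_mono sbm_prob_le[OF True adj] p0)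
    then have "F y \<le> ennreal (?c * Gr k (fst y) * Hr k (snd y))"
      unfolding F_def using True by (simp add: ennreal_leI mult.assoc)
    also have "\<dots> = ennreal ?c * (ennreal (Gr k (fst y)) * ennreal (Hr k (snd y)))"
      using c0 Gr_nonneg[of k "fst y"] Hr_nonneg[of k "snd y"] mult_nonneg_nonneg[OF Gr_nonneg[of k "fst y"] Hr_nonneg[of k "snd y"]]
      by (simp add: ennreal_mult[symmetric] mult.assoc del: ennreal_mult)
    also have "ennreal (Gr k (fst y)) = Gf k (fst y)" by (simp add: Gf_def Gr_def)
    also have "ennreal (Hr k (snd y)) = Hf k (snd y)"
      by (simp add: Hf_def Hr_def prod_ennreal hr_nonneg)
    finally show ?thesis .
  qed (simp add: F_def)
  have sf2: "sigma_finite_measure ?M2" by (rule PSF.sigma_finite[OF finite_upper_pairs])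
  note [measurable] = Gf_meas Hf_meas
  have mG[measurable]: "(\<lambda>y. Gf k (fst y)) \<in> borel_measurable (?M1 \<Otimes>\<^sub>M ?M2)"
    by (rule measurable_compose[OF measurable_fst Gf_meas])
  have mH[measurable]: "(\<lambda>y. Hf k (snd y)) \<in> borel_measurable (?M1 \<Otimes>\<^sub>M ?M2)"
    by (rule measurable_compose[OF measurable_snd Hf_meas])
  have "(\<integral>\<^sup>+ y. F y \<partial>KT_measure k) \<le> (\<integral>\<^sup>+ y. ennreal ?c * (Gf k (fst y) * Hf k (snd y)) \<partial>(?M1 \<Otimes>\<^sub>M ?M2))"
    unfolding KT_measure_def by (intro nn_integral_mono Fle)
  also have "\<dots> = ennreal ?c * (\<integral>\<^sup>+ y. Gf k (fst y) * Hf k (snd y) \<partial>(?M1 \<Otimes>\<^sub>M ?M2))"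
    by (rule nn_integral_cmult) (rule borel_measurable_times_ennreal[OF mG mH])
  also have "(\<integral>\<^sup>+ y. Gf k (fst y) * Hf k (snd y) \<partial>(?M1 \<Otimes>\<^sub>M ?M2)) = (\<integral>\<^sup>+ u. \<integral>\<^sup>+ v. Gf k u * Hf k v \<partial>?M2 \<partial>?M1)"
    using sigma_finite_measure.nn_integral_fst[OF sf2 borel_measurable_times_ennreal[OF mG mH]] by simp
  also have "\<dots> = (\<integral>\<^sup>+ u. Gf k u * (\<integral>\<^sup>+ v. Hf k v \<partial>?M2) \<partial>?M1)"
    by (intro nn_integral_cong nn_integral_cmult) measurable
  also have "\<dots> = (\<integral>\<^sup>+ u. Gf k u \<partial>?M1) * (\<integral>\<^sup>+ v. Hf k v \<partial>?M2)"
    by (rule nn_integral_multc) measurable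
  also have "\<dots> \<le> ennreal (6 * 2 ^ (k - 2)) * ennreal (2 ^ card (upper_pairs k))"
  proof (intro mult_mono)
    show "(\<integral>\<^sup>+ u. Gf k u \<partial>?M1) \<le> ennreal (6 * 2 ^ (k - 2))"
      using G_int[OF k] by (simp add: ennreal_mult ennreal_power[symmetric])
    show "(\<integral>\<^sup>+ v. Hf k v \<partial>?M2) \<le> ennreal (2 ^ card (upper_pairs k))"
      using PiM_hr[OF finite_upper_pairs, of k] by (simp add: Hf_def ennreal_power[symmetric])
  qed auto
  finally have le0: "(\<integral>\<^sup>+ y. F y \<partial>KT_measure k) \<le> ennreal ?c * (ennreal (6 * 2 ^ (k - 2)) * ennreal (2 ^ card (upper_pairs k)))"
    by (simp add: mult_left_mono)
  have eqc: "ennreal ?c * (ennreal (6 * 2 ^ (k - 2)) * ennreal (2 ^ card (upper_pairs k))) = ennreal (?c * (6 * 2 ^ (k - 2)) * 2 ^ card (upper_pairs k))"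
    using c0 by (simp add: ennreal_mult[symmetric] mult.assoc del: ennreal_numeral)
  have le: "(\<integral>\<^sup>+ y. F y \<partial>KT_measure k) \<le> ennreal (?c * (6 * 2 ^ (k - 2)) * 2 ^ card (upper_pairs k))"
    using le0 eqc by simp
  have "KT k n x = enn2real (\<integral>\<^sup>+ y. F y \<partial>KT_measure k)"
    unfolding KT_def F_def by simp
  also have "\<dots> \<le> enn2real (ennreal (?c * (6 * 2 ^ (k - 2)) * 2 ^ card (upper_pairs k)))"
    by (rule enn2real_mono[OF le]) simp
  also have "\<dots> = ?c * (6 * 2 ^ (k - 2)) * 2 ^ card (upper_pairs k)"
    using c0 by simp
  finally show ?thesis by simp
qed



lemma exp2_ge4: "exp (2::real) \<ge> 4"
proof -
  have "exp (1::real) \<ge> 2" using exp_ge_add_one_self[of 1] by simp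
  then have "exp 1 * exp 1 \<ge> (2::real) * 2" by (intro mult_mono) auto
  then show ?thesis by (simp add: mult_exp_exp)
qed

lemma pw_lower:
  assumes q: "1/4 \<le> q" "q \<le> 1" and e: "0 \<le> e" "e \<le> B"
  shows "pw q e \<ge> exp (-2 * B)"
proof (cases "e = 0")
  case True then show ?thesis using e by (simp add: pw_def)
next
  case False
  have "exp (-2) \<le> (1/4::real)"
  proof -
    have "exp (-2) = 1 / exp (2::real)" by (simp add: exp_minus field_simps)
    also have "\<dots> \<le> 1/4" using exp2_ge4 by (simp add: field_simps)
    finally show ?thesis .
  qed
  then have "exp (-2) \<le> q" using q by linarith
  then have "ln (exp (-2)) \<le> ln q" using q by (subst ln_le_cancel_iff) auto
  then have l: "-2 \<le> ln q" by simp
  have "e * (-2) \<le> e * ln q" using l e by (intro mult_left_mono) auto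
  then have "-2 * B \<le> e * ln q" using e by linarith
  then have "exp (-2 * B) \<le> exp (e * ln q)" by simp
  also have "exp (e * ln q) = q powr e" using q by (simp add: powr_def)
  finally show ?thesis using False by (simp add: pw_def)
qed

lemma cnt_nn_le: "cnt_nn n z a b \<le> n * n"
proof -
  have "cnt_nn n z a b \<le> card ({..<n} \<times> {..<n})"
    unfolding cnt_nn_card by (rule card_mono) auto
  then show ?thesis by (simp add: card_cartesian_product)
qed

lemma aux_half: "(a::real) \<le> b \<Longrightarrow> b \<le> c \<Longrightarrow> 0 \<le> a \<Longrightarrow> 0 \<le> c \<Longrightarrow> (b - a)/2 \<le> c" by (simp add: field_simps)

lemma joint1_lower:
  assumes adj: "adj_matrix n x" and p: "1/4 \<le> P 1 1" "P 1 1 \<le> 3/4" and pi1: "\<pi> 1 = 1"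
  shows "sbm_joint 1 \<pi> P n z x \<ge> exp (-4 * real (n*n))"
proof -
  let ?O = "cnt_O n z x 1 1" and ?N = "cnt_nn n z 1 1"
  have ON: "?O \<le> ?N" "?N \<le> n * n" using cnt_O_le[OF adj] cnt_nn_le by auto
  have r: "real ?O \<le> real ?N" "real ?N \<le> real (n * n)" using ON of_nat_le_iff by blast+
  have r0: "0 \<le> real ?O" "0 \<le> real (n*n)" by simp_all
  have "sbm_joint 1 \<pi> P n z x = pw (P 1 1) (real ?O / 2) * pw (1 - P 1 1) ((real ?N - real ?O) / 2)"
    using pi1 by (simp add: sbm_joint_def)
  also have "\<dots> \<ge> exp (-2 * real (n*n)) * exp (-2 * real (n*n))"
  proof (intro mult_mono pw_lower)
    show "real ?O / 2 \<le> real (n * n)" using r r0 by linarith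
    show "(real ?N - real ?O) / 2 \<le> real (n * n)" by (rule aux_half[OF r(1) r(2) r0])
  qed (use p ON in \<open>auto intro: pw_nonneg\<close>)
  also have "exp (-2 * real (n*n)) * exp (-2 * real (n*n)) = exp (-4 * real (n*n))"
    by (simp add: mult_exp_exp[symmetric] flip: exp_add)
  finally show ?thesis .
qed



lemma powr_mhalf_ge1: assumes "0 < t" "t \<le> (1::real)" shows "1 \<le> t powr (-1/2)"
proof -
  have "sqrt t \<le> 1" using assms by simp
  then have "1 \<le> 1 / sqrt t" using assms by (simp add: field_simps)
  then show ?thesis using powr_mhalf[of t] assms by simp
qed

lemma emeasure_PiM_empty_space: "emeasure (PiM {} M) (space (PiM {} M)) = 1"
  by (simp add: space_PiM_empty)

lemma KT1_int_lower:
  assumes adj: "adj_matrix n x"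
  shows "(\<integral>\<^sup>+ y. ennreal (if (pi_of 1 (fst y), P_of (snd y)) \<in> Theta 1
       then sbm_prob 1 (pi_of 1 (fst y)) (P_of (snd y)) n x * KT_prior 1 (pi_of 1 (fst y)) (P_of (snd y))
       else 0) \<partial>KT_measure 1) \<ge> ennreal (exp (-4 * real (n*n) - 3))"
proof -
  let ?M1 = "PiM {} (\<lambda>_. lborel :: real measure) :: (nat \<Rightarrow> real) measure"
  let ?M2 = "PiM (upper_pairs 1) (\<lambda>_. lborel :: real measure)"
  let ?c = "exp (-4 * real (n*n)) / pi"
  have up: "upper_pairs 1 = {(1,1)}" by (auto simp: upper_pairs_def)
  have e1: "{1..<1::nat} = {}" by simp
  have KTm: "KT_measure 1 = ?M1 \<Otimes>\<^sub>M ?M2" unfolding KT_measure_def e1 by (rule refl)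
  have up': "upper_pairs (Suc 0) = {(Suc 0, Suc 0)}" by (auto simp: upper_pairs_def)
  have pt: "ennreal ?c * indicator {1/4..3/4} (snd y (1,1)) \<le>
      ennreal (if (pi_of 1 (fst y), P_of (snd y)) \<in> Theta 1
       then sbm_prob 1 (pi_of 1 (fst y)) (P_of (snd y)) n x * KT_prior 1 (pi_of 1 (fst y)) (P_of (snd y))
       else 0)" for y
  proof (cases "snd y (1,1) \<in> {1/4..3/4}")
    case True
    let ?p = "snd y (1,1)"
    have pi1: "pi_of 1 (fst y) 1 = 1" by (simp add: pi_of_def)
    have P11: "P_of (snd y) 1 1 = ?p" by (simp add: P_of_def)
    have th: "(pi_of 1 (fst y), P_of (snd y)) \<in> Theta 1"
      using True pi1 P11 by (auto simp: Theta_def)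
    define z0 where "z0 = restrict (\<lambda>_. 1::nat) {0..<n}"
    have z0: "z0 \<in> PiE {0..<n} (\<lambda>_. {1..1})" by (simp add: z0_def)
    have "exp (-4 * real (n*n)) \<le> sbm_joint 1 (pi_of 1 (fst y)) (P_of (snd y)) n z0 x"
      by (rule joint1_lower[OF adj]) (use True P11 pi1 in auto)
    also have "\<dots> \<le> sbm_prob 1 (pi_of 1 (fst y)) (P_of (snd y)) n x"
      unfolding sbm_prob_def
      by (rule member_le_sum[OF z0], rule joint_le1(2)[OF th adj], simp)
    finally have sp: "exp (-4 * real (n*n)) \<le> sbm_prob 1 (pi_of 1 (fst y)) (P_of (snd y)) n x" .
    have pr: "KT_prior 1 (pi_of 1 (fst y)) (P_of (snd y)) = hr ?p"
    proof -
      have c1: "Cg 1 = 1" unfolding Cg_def using Gamma_one_half_real by simp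
      have g1: "Gr 1 (fst y) = 1" unfolding Gr_def phr_def by simp
      have h1: "Hr 1 (snd y) = hr ?p" unfolding Hr_def up by simp
      show ?thesis using prior_eq[OF th] c1 g1 h1 by simp
    qed
    have "1 / pi \<le> hr ?p"
    proof -
      have a1: "?p powr (-1/2) \<ge> 1" by (rule powr_mhalf_ge1) (use True in auto)
      have a2: "(1 - ?p) powr (-1/2) \<ge> 1" by (rule powr_mhalf_ge1) (use True in auto)
      note a = a1 a2
      have "1 \<le> ?p powr (-1/2) * (1 - ?p) powr (-1/2)"
        using mult_mono[OF a(1) a(2)] by simp
      then show ?thesis using True by (simp add: hr_def divide_right_mono)
    qed
    then have "exp (-4 * real (n*n)) * (1/pi) \<le> sbm_prob 1 (pi_of 1 (fst y)) (P_of (snd y)) n x * hr ?p"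
      by (rule mult_mono[OF sp]) (use sp in \<open>auto intro: order.trans[OF less_imp_le[OF exp_gt_zero]]\<close>)
    then have "?c \<le> sbm_prob 1 (pi_of 1 (fst y)) (P_of (snd y)) n x * KT_prior 1 (pi_of 1 (fst y)) (P_of (snd y))"
      unfolding pr by simp
    then show ?thesis using th True by (simp add: ennreal_leI)
  qed simp
  have sf2: "sigma_finite_measure ?M2" by (rule PSF.sigma_finite[OF finite_upper_pairs])
  have mI: "(\<lambda>y::(nat \<Rightarrow> real) \<times> (nat \<times> nat \<Rightarrow> real). indicator {1/4..3/4} (snd y (1,1)) :: ennreal) \<in> borel_measurable (?M1 \<Otimes>\<^sub>M ?M2)"
  proof -
    have "(\<lambda>g::nat \<times> nat \<Rightarrow> real. g (1,1)) \<in> measurable ?M2 lborel"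
      using up by (intro measurable_component_singleton) auto
    then have "(\<lambda>y::(nat \<Rightarrow> real) \<times> (nat \<times> nat \<Rightarrow> real). snd y (1,1)) \<in> measurable (?M1 \<Otimes>\<^sub>M ?M2) lborel"
      by (rule measurable_compose[OF measurable_snd])
    then show ?thesis by (rule measurable_compose[OF _ borel_measurable_indicator]) auto
  qed
  have "(\<integral>\<^sup>+ y. indicator {1/4..3/4} (snd y (1,1)) \<partial>(?M1 \<Otimes>\<^sub>M ?M2)) = (\<integral>\<^sup>+ u. \<integral>\<^sup>+ v. indicator {1/4..3/4} (v (1,1)) \<partial>?M2 \<partial>?M1)"
    using sigma_finite_measure.nn_integral_fst[OF sf2 mI] by simp
  also have "(\<lambda>u::nat\<Rightarrow>real. \<integral>\<^sup>+ v. indicator {1/4..3/4} (v (1,1)) \<partial>?M2) = (\<lambda>u. ennreal (1/2))"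
  proof -
    have "(\<integral>\<^sup>+ v. indicator {1/4..3/4} (v (1,1)) \<partial>?M2) = (\<integral>\<^sup>+ t. indicator {1/4..3/4::real} t \<partial>lborel)"
      unfolding up by (rule PSF.product_nn_integral_singleton) simp
    also have "\<dots> = ennreal (1/2)" by simp
    finally show ?thesis by simp
  qed
  also have "(\<integral>\<^sup>+ u. ennreal (1/2) \<partial>?M1) = ennreal (1/2)"
    by (simp add: space_PiM_empty)
  finally have I: "(\<integral>\<^sup>+ y. indicator {1/4..3/4} (snd y (1,1)) \<partial>(?M1 \<Otimes>\<^sub>M ?M2)) = ennreal (1/2)" .
  have "ennreal (?c / 2) = ennreal ?c * (\<integral>\<^sup>+ y. indicator {1/4..3/4} (snd y (1,1)) \<partial>(?M1 \<Otimes>\<^sub>M ?M2))"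
  proof -
    have "ennreal (?c / 2) = ennreal (?c * (1/2))" by simp
    also have "\<dots> = ennreal ?c * ennreal (1/2)" by (rule ennreal_mult) auto
    finally show ?thesis unfolding I .
  qed
  also have "\<dots> = (\<integral>\<^sup>+ y. ennreal ?c * indicator {1/4..3/4} (snd y (1,1)) \<partial>(?M1 \<Otimes>\<^sub>M ?M2))"
    by (rule nn_integral_cmult[symmetric, OF mI])
  also have "\<dots> \<le> (\<integral>\<^sup>+ y. ennreal (if (pi_of 1 (fst y), P_of (snd y)) \<in> Theta 1
       then sbm_prob 1 (pi_of 1 (fst y)) (P_of (snd y)) n x * KT_prior 1 (pi_of 1 (fst y)) (P_of (snd y))
       else 0) \<partial>KT_measure 1)"
    unfolding KTm by (intro nn_integral_mono pt)
  finally have A: "ennreal (?c / 2) \<le> \<dots>" .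
  have "exp (-4 * real (n*n) - 3) \<le> ?c / 2"
  proof -
    have "exp (-4 * real (n*n) - 3) = exp (-4 * real (n*n)) * (1 / exp 3)"
      by (simp add: exp_diff)
    also have "1 / exp 3 \<le> 1 / (2 * pi)"
    proof -
      have "exp (3::real) = exp 2 * exp 1" by (simp flip: exp_add)
      also have "\<dots> \<ge> 4 * 2" using exp2_ge4 exp_ge_add_one_self[of 1] by (intro mult_mono) auto
      finally have "2 * pi \<le> exp (3::real)" using pi_less_4 by linarith
      then show ?thesis by (intro divide_left_mono) auto
    qed
    then have "exp (-4 * real (n*n)) * (1 / exp 3) \<le> exp (-4 * real (n*n)) * (1 / (2 * pi))"
      by (intro mult_left_mono) auto
    finally show ?thesis by simp
  qed
  then show ?thesis using A by (meson ennreal_leI order_trans)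
qed

lemma KT1_ln:
  assumes adj: "adj_matrix n x"
  shows "ln (KT 1 n x) \<ge> -4 * real (n*n) - 3"
proof -
  let ?I = "(\<integral>\<^sup>+ y. ennreal (if (pi_of 1 (fst y), P_of (snd y)) \<in> Theta 1
       then sbm_prob 1 (pi_of 1 (fst y)) (P_of (snd y)) n x * KT_prior 1 (pi_of 1 (fst y)) (P_of (snd y))
       else 0) \<partial>KT_measure 1)"
  have KT: "KT 1 n x = enn2real ?I" unfolding KT_def by (rule refl)
  show ?thesis
  proof (cases "?I = top")
    case True
    then have "KT 1 n x = 0" using KT by simp
    then have "ln (KT 1 n x) = 0" by simp
    moreover have "-4 * real (n*n) - 3 \<le> 0" using of_nat_0_le_iff[of "n*n"] by linarith
    ultimately show ?thesis by simp
  next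
    case False
    have lt: "?I < top" using False by (simp add: top.not_eq_extremum)
    have "enn2real (ennreal (exp (-4 * real (n*n) - 3))) \<le> enn2real ?I"
      by (rule enn2real_mono[OF KT1_int_lower[OF adj] lt])
    then have "exp (-4 * real (n*n) - 3) \<le> enn2real ?I" by simp
    then have "exp (-4 * real (n*n) - 3) \<le> KT 1 n x" using KT by simp
    then have "ln (exp (-4 * real (n*n) - 3)) \<le> ln (KT 1 n x)"
      by (intro ln_mono) auto
    then show ?thesis by simp
  qed
qed



lemma group_pow:
  assumes S: "finite S" and T: "finite T" and g: "\<And>p. p \<in> S \<Longrightarrow> g p \<in> T"
  shows "(\<Prod>t\<in>T. h t ^ card {p \<in> S. g p = t}) = (\<Prod>p\<in>S. h (g p))"
proof -
  have "(\<Prod>p\<in>S. h (g p)) = (\<Prod>t\<in>T. \<Prod>p\<in>{p \<in> S. g p = t}. h (g p))"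
    by (rule prod.group[symmetric]) (use S T g in auto)
  also have "\<dots> = (\<Prod>t\<in>T. h t ^ card {p \<in> S. g p = t})"
  proof (rule prod.cong)
    fix t
    have "(\<Prod>p\<in>{p \<in> S. g p = t}. h (g p)) = (\<Prod>p\<in>{p \<in> S. g p = t}. h t)"
      by (rule prod.cong) auto
    then show "(\<Prod>p\<in>{p \<in> S. g p = t}. h (g p)) = h t ^ card {p \<in> S. g p = t}" by simp
  qed simp
  finally show ?thesis by simp
qed

lemma pi_part:
  assumes z: "z \<in> PiE {0..<n} (\<lambda>_. {1..k})"
  shows "(\<Prod>a\<in>{1..k}. \<pi> a ^ cnt_n n z a) = (\<Prod>i\<in>{0..<n}. \<pi> (z i))"
proof -
  have "\<And>a. cnt_n n z a = card {i \<in> {0..<n}. z i = a}"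
    unfolding cnt_n_def by (rule arg_cong[where f=card]) auto
  then have "(\<Prod>a\<in>{1..k}. \<pi> a ^ cnt_n n z a) = (\<Prod>a\<in>{1..k}. \<pi> a ^ card {i \<in> {0..<n}. z i = a})"
    by simp
  also have "\<dots> = (\<Prod>i\<in>{0..<n}. \<pi> (z i))"
    by (rule group_pow) (use z in \<open>auto simp: PiE_def Pi_def\<close>)
  finally show ?thesis .
qed

lemma pi_sum:
  assumes th: "(\<pi>, P) \<in> Theta k"
  shows "(\<Sum>z\<in>PiE {0..<n} (\<lambda>_. {1..k}). \<Prod>a\<in>{1..k}. \<pi> a ^ cnt_n n z a) = 1"
proof -
  have "(\<Sum>z\<in>PiE {0..<n} (\<lambda>_. {1..k}). \<Prod>a\<in>{1..k}. \<pi> a ^ cnt_n n z a)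
      = (\<Sum>z\<in>PiE {0..<n} (\<lambda>_. {1..k}). \<Prod>i\<in>{0..<n}. \<pi> (z i))"
    by (rule sum.cong[OF refl], rule pi_part)
  also have "\<dots> = (\<Prod>i\<in>{0..<n}. \<Sum>a\<in>{1..k}. \<pi> a)"
    by (rule prod_sum_PiE[symmetric]) auto
  also have "\<dots> = 1" using th by (simp add: Theta_def)
  finally show ?thesis .
qed

definition fpair :: "(nat \<Rightarrow> nat \<Rightarrow> real) \<Rightarrow> (nat \<Rightarrow> nat) \<Rightarrow> (nat \<Rightarrow> nat \<Rightarrow> bool) \<Rightarrow> nat \<times> nat \<Rightarrow> real" where
  "fpair P z x p = (if x (fst p) (snd p) then P (z (fst p)) (z (snd p)) else 1 - P (z (fst p)) (z (snd p)))"

definition Dset :: "nat \<Rightarrow> (nat \<times> nat) set" where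
  "Dset n = {(i,j). i < n \<and> j < n \<and> i \<noteq> j}"

definition Pairs :: "nat \<Rightarrow> (nat \<times> nat) set" where
  "Pairs n = {(i,j). i < j \<and> j < n}"

lemma finite_Dset: "finite (Dset n)"
  unfolding Dset_def by (rule finite_subset[of _ "{..<n} \<times> {..<n}"]) auto

lemma finite_Pairs: "finite (Pairs n)"
  unfolding Pairs_def by (rule finite_subset[of _ "{..<n} \<times> {..<n}"]) auto

definition Qz :: "nat \<Rightarrow> (nat \<Rightarrow> nat \<Rightarrow> real) \<Rightarrow> nat \<Rightarrow> (nat \<Rightarrow> nat) \<Rightarrow> (nat \<Rightarrow> nat \<Rightarrow> bool) \<Rightarrow> real" where
  "Qz k P n z x = (\<Prod>a\<in>{1..k}. \<Prod>b\<in>{1..k}.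
        pw (P a b) (real (cnt_O n z x a b) / 2) *
        pw (1 - P a b) ((real (cnt_nn n z a b) - real (cnt_O n z x a b)) / 2))"

lemma joint_split: "sbm_joint k \<pi> P n z x = (\<Prod>a\<in>{1..k}. \<pi> a ^ cnt_n n z a) * Qz k P n z x"
  by (simp add: sbm_joint_def Qz_def)

lemma pw_sq: "0 \<le> q \<Longrightarrow> pw q (real m / 2) ^ 2 = q ^ m"
proof (cases "m = 0")
  case False
  assume q: "0 \<le> q"
  show ?thesis
  proof (cases "q = 0")
    case True then show ?thesis using False by (simp add: pw_def)
  next
    case False': False
    then have "q > 0" using q by simp
    then have "(q powr (real m / 2)) ^ 2 = q powr (real m / 2 * 2)"
      by (simp add: powr_realpow[symmetric] powr_powr)
    also have "\<dots> = q ^ m" using \<open>q > 0\<close> by (simp add: powr_realpow)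
    finally show ?thesis using False by (simp add: pw_def)
  qed
qed (simp add: pw_def)

lemma Qz_sq:
  assumes th: "(\<pi>, P) \<in> Theta k" and adj: "adj_matrix n x" and z: "z \<in> PiE {0..<n} (\<lambda>_. {1..k})"
  shows "Qz k P n z x ^ 2 = (\<Prod>p\<in>Dset n. fpair P z x p)"
proof -
  have PP: "\<And>a b. a \<in> {1..k} \<Longrightarrow> b \<in> {1..k} \<Longrightarrow> 0 \<le> P a b \<and> P a b \<le> 1"
    using th by (auto simp: Theta_def)
  have zr: "\<And>i. i < n \<Longrightarrow> z i \<in> {1..k}" using z by (auto simp: PiE_def Pi_def)
  let ?E = "{p \<in> Dset n. x (fst p) (snd p)}" and ?NE = "{p \<in> Dset n. \<not> x (fst p) (snd p)}"
  let ?g = "\<lambda>p. (z (fst p), z (snd p))"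
  have gT: "\<And>p. p \<in> Dset n \<Longrightarrow> ?g p \<in> {1..k} \<times> {1..k}" using zr by (auto simp: Dset_def)
  have cO: "cnt_O n z x a b = card {p \<in> ?E. ?g p = (a,b)}" for a b
    unfolding cnt_O_card[OF adj] by (rule arg_cong[where f=card]) (auto simp: Dset_def)
  have cN: "cnt_nn n z a b - cnt_O n z x a b = card {p \<in> ?NE. ?g p = (a,b)}" for a b
    unfolding cnt_nn_minus_O[OF adj] by (rule arg_cong[where f=card]) (auto simp: Dset_def)
  have "Qz k P n z x ^ 2 = (\<Prod>a\<in>{1..k}. \<Prod>b\<in>{1..k}. P a b ^ cnt_O n z x a b * (1 - P a b) ^ (cnt_nn n z a b - cnt_O n z x a b))"
    unfolding Qz_def prod_power_distrib
  proof (intro prod.cong refl)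
    fix a b assume ab: "a \<in> {1..k}" "b \<in> {1..k}"
    have e: "(real (cnt_nn n z a b) - real (cnt_O n z x a b)) / 2 = real (cnt_nn n z a b - cnt_O n z x a b) / 2"
      using cnt_O_le[OF adj] by (simp add: of_nat_diff)
    show "(pw (P a b) (real (cnt_O n z x a b) / 2) * pw (1 - P a b) ((real (cnt_nn n z a b) - real (cnt_O n z x a b)) / 2)) ^ 2
        = P a b ^ cnt_O n z x a b * (1 - P a b) ^ (cnt_nn n z a b - cnt_O n z x a b)"
      unfolding e power_mult_distrib using PP[OF ab] by (simp add: pw_sq)
  qed
  also have "\<dots> = (\<Prod>a\<in>{1..k}. \<Prod>b\<in>{1..k}. P a b ^ cnt_O n z x a b) * (\<Prod>a\<in>{1..k}. \<Prod>b\<in>{1..k}. (1 - P a b) ^ (cnt_nn n z a b - cnt_O n z x a b))"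
    by (simp add: prod.distrib)
  also have "(\<Prod>a\<in>{1..k}. \<Prod>b\<in>{1..k}. P a b ^ cnt_O n z x a b) = (\<Prod>p\<in>?E. P (z (fst p)) (z (snd p)))"
  proof -
    have "(\<Prod>a\<in>{1..k}. \<Prod>b\<in>{1..k}. P a b ^ cnt_O n z x a b) = (\<Prod>t\<in>{1..k} \<times> {1..k}. (case_prod P) t ^ card {p \<in> ?E. ?g p = t})"
      unfolding cO prod.cartesian_product by (rule prod.cong) auto
    also have "\<dots> = (\<Prod>p\<in>?E. case_prod P (?g p))"
      by (rule group_pow) (use finite_Dset gT in auto)
    finally show ?thesis by simp
  qed
  also have "(\<Prod>a\<in>{1..k}. \<Prod>b\<in>{1..k}. (1 - P a b) ^ (cnt_nn n z a b - cnt_O n z x a b)) = (\<Prod>p\<in>?NE. 1 - P (z (fst p)) (z (snd p)))"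
  proof -
    have "(\<Prod>a\<in>{1..k}. \<Prod>b\<in>{1..k}. (1 - P a b) ^ (cnt_nn n z a b - cnt_O n z x a b)) = (\<Prod>t\<in>{1..k} \<times> {1..k}. (\<lambda>(a,b). 1 - P a b) t ^ card {p \<in> ?NE. ?g p = t})"
      unfolding cN prod.cartesian_product by (rule prod.cong) auto
    also have "\<dots> = (\<Prod>p\<in>?NE. (\<lambda>(a,b). 1 - P a b) (?g p))"
      by (rule group_pow) (use finite_Dset gT in auto)
    finally show ?thesis by simp
  qed
  also have "(\<Prod>p\<in>?E. P (z (fst p)) (z (snd p))) * (\<Prod>p\<in>?NE. 1 - P (z (fst p)) (z (snd p))) = (\<Prod>p\<in>Dset n. fpair P z x p)"
  proof -
    have "(\<Prod>p\<in>Dset n. fpair P z x p) = (\<Prod>p\<in>Dset n \<inter> {p. x (fst p) (snd p)}. P (z (fst p)) (z (snd p))) * (\<Prod>p\<in>Dset n \<inter> - {p. x (fst p) (snd p)}. 1 - P (z (fst p)) (z (snd p)))"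
      unfolding fpair_def by (rule prod.If_cases[OF finite_Dset])
    moreover have "Dset n \<inter> {p. x (fst p) (snd p)} = ?E" "Dset n \<inter> - {p. x (fst p) (snd p)} = ?NE" by auto
    ultimately show ?thesis by simp
  qed
  finally show ?thesis .
qed

lemma Dset_split: "Dset n = Pairs n \<union> prod.swap ` Pairs n" "Pairs n \<inter> prod.swap ` Pairs n = {}"
  by (auto simp: Dset_def Pairs_def image_def)

lemma Qz_eq:
  assumes th: "(\<pi>, P) \<in> Theta k" and adj: "adj_matrix n x" and z: "z \<in> PiE {0..<n} (\<lambda>_. {1..k})"
  shows "Qz k P n z x = (\<Prod>p\<in>Pairs n. fpair P z x p)"
proof -
  have PP: "\<And>a b. a \<in> {1..k} \<Longrightarrow> b \<in> {1..k} \<Longrightarrow> 0 \<le> P a b \<and> P a b \<le> 1 \<and> P a b = P b a"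
    using th by (auto simp: Theta_def)
  have zr: "\<And>i. i < n \<Longrightarrow> z i \<in> {1..k}" using z by (auto simp: PiE_def Pi_def)
  have sym: "fpair P z x (prod.swap p) = fpair P z x p" if pP: "p \<in> Pairs n" for p
  proof -
    obtain i j where p: "p = (i,j)" "i < j" "j < n" using pP by (auto simp: Pairs_def)
    have "x j i = x i j" using adj p by (auto simp: adj_matrix_def)
    moreover have "P (z j) (z i) = P (z i) (z j)" using PP[OF zr zr, of i j] p by auto
    ultimately show ?thesis using p by (simp add: fpair_def)
  qed
  have "(\<Prod>p\<in>Dset n. fpair P z x p) = (\<Prod>p\<in>Pairs n. fpair P z x p) * (\<Prod>p\<in>prod.swap ` Pairs n. fpair P z x p)"
    unfolding Dset_split(1) by (rule prod.union_disjoint) (auto simp: finite_Pairs Dset_split(2))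
  also have "(\<Prod>p\<in>prod.swap ` Pairs n. fpair P z x p) = (\<Prod>p\<in>Pairs n. fpair P z x (prod.swap p))"
    by (subst prod.reindex) (auto simp: inj_on_def)
  also have "\<dots> = (\<Prod>p\<in>Pairs n. fpair P z x p)" by (rule prod.cong) (auto simp: sym)
  finally have sq: "Qz k P n z x ^ 2 = (\<Prod>p\<in>Pairs n. fpair P z x p) ^ 2"
    using Qz_sq[OF th adj z] by (simp add: power2_eq_square)
  have q0: "0 \<le> Qz k P n z x"
    unfolding Qz_def using PP by (auto intro!: prod_nonneg mult_nonneg_nonneg pw_nonneg)
  have f0: "0 \<le> (\<Prod>p\<in>Pairs n. fpair P z x p)"
  proof (intro prod_nonneg)
    fix p assume "p \<in> Pairs n"
    then have "z (fst p) \<in> {1..k}" "z (snd p) \<in> {1..k}" using zr by (auto simp: Pairs_def)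
    then show "0 \<le> fpair P z x p" using PP by (auto simp: fpair_def)
  qed
  show ?thesis using sq q0 f0 by simp
qed

definition xA :: "(nat \<times> nat) set \<Rightarrow> nat \<Rightarrow> nat \<Rightarrow> bool" where
  "xA A i j = ((i,j) \<in> A \<or> (j,i) \<in> A)"

lemma adj_xA: "A \<subseteq> Pairs n \<Longrightarrow> adj_matrix n (xA A)"
  by (auto simp: adj_matrix_def xA_def Pairs_def)

lemma sum_Qz:
  assumes th: "(\<pi>, P) \<in> Theta k" and z: "z \<in> PiE {0..<n} (\<lambda>_. {1..k})"
  shows "(\<Sum>A\<in>Pow (Pairs n). Qz k P n z (xA A)) = 1"
proof -
  let ?u = "\<lambda>p. P (z (fst p)) (z (snd p))"
  have "(\<Sum>A\<in>Pow (Pairs n). Qz k P n z (xA A)) = (\<Sum>A\<in>Pow (Pairs n). (\<Prod>p\<in>A. ?u p) * (\<Prod>p\<in>Pairs n - A. 1 - ?u p))"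
  proof (rule sum.cong)
    fix A assume A: "A \<in> Pow (Pairs n)"
    have "Qz k P n z (xA A) = (\<Prod>p\<in>Pairs n. fpair P z (xA A) p)"
      using Qz_eq[OF th adj_xA z] A by auto
    also have "\<dots> = (\<Prod>p\<in>Pairs n. if p \<in> A then ?u p else 1 - ?u p)"
    proof (rule prod.cong)
      fix p assume p: "p \<in> Pairs n"
      have "xA A (fst p) (snd p) = (p \<in> A)"
        using A p by (auto simp: xA_def Pairs_def)
      then show "fpair P z (xA A) p = (if p \<in> A then ?u p else 1 - ?u p)" by (simp add: fpair_def)
    qed simp
    also have "\<dots> = (\<Prod>p\<in>Pairs n \<inter> {p. p \<in> A}. ?u p) * (\<Prod>p\<in>Pairs n \<inter> - {p. p \<in> A}. 1 - ?u p)"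
      by (rule prod.If_cases[OF finite_Pairs])
    also have "Pairs n \<inter> {p. p \<in> A} = A" using A by auto
    also have "Pairs n \<inter> - {p. p \<in> A} = Pairs n - A" by auto
    finally show "Qz k P n z (xA A) = (\<Prod>p\<in>A. ?u p) * (\<Prod>p\<in>Pairs n - A. 1 - ?u p)" .
  qed simp
  also have "\<dots> = (\<Prod>p\<in>Pairs n. ?u p + (1 - ?u p))"
    by (rule prod_add[symmetric, OF finite_Pairs])
  also have "\<dots> = 1" by simp
  finally show ?thesis .
qed

lemma sum_sbm_prob:
  assumes th: "(\<pi>, P) \<in> Theta k"
  shows "(\<Sum>A\<in>Pow (Pairs n). sbm_prob k \<pi> P n (xA A)) = 1"
proof -
  have "(\<Sum>A\<in>Pow (Pairs n). sbm_prob k \<pi> P n (xA A)) =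
      (\<Sum>z\<in>PiE {0..<n} (\<lambda>_. {1..k}). \<Sum>A\<in>Pow (Pairs n). (\<Prod>a\<in>{1..k}. \<pi> a ^ cnt_n n z a) * Qz k P n z (xA A))"
    unfolding sbm_prob_def joint_split by (rule sum.swap)
  also have "\<dots> = (\<Sum>z\<in>PiE {0..<n} (\<lambda>_. {1..k}). (\<Prod>a\<in>{1..k}. \<pi> a ^ cnt_n n z a) * (\<Sum>A\<in>Pow (Pairs n). Qz k P n z (xA A)))"
    by (simp add: sum_distrib_left)
  also have "\<dots> = (\<Sum>z\<in>PiE {0..<n} (\<lambda>_. {1..k}). (\<Prod>a\<in>{1..k}. \<pi> a ^ cnt_n n z a))"
    by (rule sum.cong) (auto simp: sum_Qz[OF th])
  also have "\<dots> = 1" by (rule pi_sum[OF th])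
  finally show ?thesis .
qed



lemma xA_Pairs:
  assumes "A \<subseteq> Pairs n" "(i,j) \<in> Pairs n"
  shows "xA A i j = ((i,j) \<in> A)"
  using assms by (auto simp: xA_def Pairs_def)

lemma adj_ae:
  assumes "prob_space M"
    and "k0 \<ge> 1"
    and th: "(\<pi>0, P0) \<in> Theta k0"
    and hyp: "\<And>n x. adj_matrix n x \<Longrightarrow>
           {\<omega> \<in> space M. \<forall>i<n. \<forall>j<n. X n \<omega> i j = x i j} \<in> sets M \<and>
           measure M {\<omega> \<in> space M. \<forall>i<n. \<forall>j<n. X n \<omega> i j = x i j} = sbm_prob k0 \<pi>0 P0 n x"
  shows "AE \<omega> in M. \<forall>n. adj_matrix n (X n \<omega>)"
proof -
  interpret prob_space M by fact
  have "AE \<omega> in M. adj_matrix n (X n \<omega>)" for n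
  proof -
    define E where "E A = {\<omega> \<in> space M. \<forall>i<n. \<forall>j<n. X n \<omega> i j = xA A i j}" for A
    have sE: "E A \<in> sets M" if AP: "A \<in> Pow (Pairs n)" for A
    proof -
      have A': "A \<subseteq> Pairs n" using AP by simp
      show ?thesis unfolding E_def by (rule conjunct1[OF hyp[OF adj_xA[OF A']]])
    qed
    have mE: "measure M (E A) = sbm_prob k0 \<pi>0 P0 n (xA A)" if AP: "A \<in> Pow (Pairs n)" for A
    proof -
      have A': "A \<subseteq> Pairs n" using AP by simp
      show ?thesis unfolding E_def by (rule conjunct2[OF hyp[OF adj_xA[OF A']]])
    qed
    have disj: "disjoint_family_on E (Pow (Pairs n))"
      unfolding disjoint_family_on_def
    proof (intro ballI impI)
      fix A B assume A: "A \<in> Pow (Pairs n)" and B: "B \<in> Pow (Pairs n)" and AB: "A \<noteq> B"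
      have "\<exists>p. (p \<in> A) \<noteq> (p \<in> B)" using AB by blast
      then obtain p where p2: "(p \<in> A) \<noteq> (p \<in> B)" by blast
      have p1: "p \<in> Pairs n" using p2 A B by blast
      note p = p1 p2
      obtain i j where ij: "p = (i,j)" "i < j" "j < n" using p(1) by (auto simp: Pairs_def)
      have "xA A i j = (p \<in> A)" using xA_Pairs[of A n i j] A p ij by simp
      moreover have "xA B i j = (p \<in> B)" using xA_Pairs[of B n i j] B p ij by simp
      ultimately have ne: "xA A i j \<noteq> xA B i j" using p2 by simp
      show "E A \<inter> E B = {}"
      proof (rule ccontr)
        assume "E A \<inter> E B \<noteq> {}"
        then obtain \<omega> where "\<omega> \<in> E A" "\<omega> \<in> E B" by blast
        then have "X n \<omega> i j = xA A i j" "X n \<omega> i j = xA B i j" using ij unfolding E_def by auto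
        then show False using ne by simp
      qed
    qed
    have un: "(\<Union>A\<in>Pow (Pairs n). E A) = {\<omega> \<in> space M. adj_matrix n (X n \<omega>)}"
    proof
      show "(\<Union>A\<in>Pow (Pairs n). E A) \<subseteq> {\<omega> \<in> space M. adj_matrix n (X n \<omega>)}"
      proof
        fix \<omega> assume "\<omega> \<in> (\<Union>A\<in>Pow (Pairs n). E A)"
        then obtain A where A: "A \<subseteq> Pairs n" "\<omega> \<in> E A" by auto
        then have "\<forall>i<n. \<forall>j<n. X n \<omega> i j = xA A i j" "\<omega> \<in> space M" unfolding E_def by auto
        then show "\<omega> \<in> {\<omega> \<in> space M. adj_matrix n (X n \<omega>)}"
          using adj_xA[OF A(1)] by (auto simp: adj_matrix_def)
      qed
    next
      show "{\<omega> \<in> space M. adj_matrix n (X n \<omega>)} \<subseteq> (\<Union>A\<in>Pow (Pairs n). E A)"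
      proof
        fix \<omega> assume w: "\<omega> \<in> {\<omega> \<in> space M. adj_matrix n (X n \<omega>)}"
        define A where "A = {p \<in> Pairs n. X n \<omega> (fst p) (snd p)}"
        have "\<forall>i<n. \<forall>j<n. X n \<omega> i j = xA A i j"
        proof (intro allI impI)
          fix i j assume i: "i < n" and j: "j < n"
          have sy: "X n \<omega> i j = X n \<omega> j i" "\<not> X n \<omega> i i" using w i j by (auto simp: adj_matrix_def)
          consider "i < j" | "j < i" | "i = j" by linarith
          then show "X n \<omega> i j = xA A i j"
          proof cases
            case 1 then show ?thesis using j by (auto simp: xA_def A_def Pairs_def)
          next
            case 2 then show ?thesis using i sy by (auto simp: xA_def A_def Pairs_def)
          next
            case 3 then show ?thesis using sy by (auto simp: xA_def A_def Pairs_def)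
          qed
        qed
        moreover have "A \<in> Pow (Pairs n)" by (auto simp: A_def)
        ultimately show "\<omega> \<in> (\<Union>A\<in>Pow (Pairs n). E A)" using w unfolding E_def by blast
      qed
    qed
    have "prob (\<Union>A\<in>Pow (Pairs n). E A) = (\<Sum>A\<in>Pow (Pairs n). prob (E A))"
      by (rule finite_measure_finite_Union) (use sE disj finite_Pairs in auto)
    also have "\<dots> = (\<Sum>A\<in>Pow (Pairs n). sbm_prob k0 \<pi>0 P0 n (xA A))"
      by (rule sum.cong) (auto simp: mE)
    also have "\<dots> = 1" by (rule sum_sbm_prob[OF th])
    finally have "prob {\<omega> \<in> space M. adj_matrix n (X n \<omega>)} = 1" unfolding un .
    then have "AE \<omega> in M. \<omega> \<in> {\<omega> \<in> space M. adj_matrix n (X n \<omega>)}" by (rule AE_prob_1)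
    then show ?thesis by (rule eventually_mono) auto
  qed
  then show ?thesis by (simp add: AE_all_countable)
qed



lemma Gamma_half_bound: "k \<ge> 1 \<Longrightarrow> Gamma (real k / 2) \<le> 2 * real k ^ k"
proof (induction k rule: less_induct)
  case (less k)
  show ?case
  proof (cases "k \<le> 2")
    case True
    then have "k = 1 \<or> k = 2" using less.prems by auto
    then show ?thesis
    proof
      assume k: "k = 1"
      have "sqrt pi \<le> sqrt 4" using pi_less_4 by (intro real_sqrt_le_mono) auto
      then have "sqrt pi \<le> 2" by simp
      then show ?thesis using k Gamma_one_half_real by simp
    next
      assume k: "k = 2"
      have "Gamma (1::real) = 1" using Gamma_fact[of 0, where 'a=real] by simp
      then show ?thesis using k by simp
    qed
  next
    case False
    let ?m = "k - 2"
    have m1: "?m \<ge> 1" "?m < k" using False by auto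
    have IH: "Gamma (real ?m / 2) \<le> 2 * real ?m ^ ?m" using less.IH[OF m1(2) m1(1)] .
    have pos: "real ?m / 2 > 0" using m1 by simp
    have eq: "real k / 2 = real ?m / 2 + 1" using False by (simp add: of_nat_diff field_simps)
    have "Gamma (real k / 2) = (real ?m / 2) * Gamma (real ?m / 2)"
      unfolding eq by (rule Gamma_plus1) (use pos in \<open>auto simp: nonpos_Ints_def\<close>)
    also have "\<dots> \<le> real k * (2 * real ?m ^ ?m)"
      by (intro mult_mono IH) (use pos in \<open>auto intro: less_imp_le\<close>)
    also have "real k * (2 * real ?m ^ ?m) \<le> real k * (2 * real k ^ (k - 1))"
    proof -
      have "real ?m ^ ?m \<le> real k ^ ?m" by (intro power_mono) auto
      also have "real k ^ ?m \<le> real k ^ (k - 1)"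
        by (intro power_increasing) (use False in auto)
      finally show ?thesis by (intro mult_left_mono) auto
    qed
    also have "real k * (2 * real k ^ (k - 1)) = 2 * real k ^ k"
      using False by (simp add: power_eq_if[of _ k])
    finally show ?thesis by simp
  qed
qed

lemma Cg_bound: "k \<ge> 1 \<Longrightarrow> Cg k \<le> 2 * real k ^ k"
proof -
  assume k: "k \<ge> 1"
  have g: "Gamma (real k / 2) > 0" using k by (intro Gamma_real_pos) auto
  have "1 \<le> sqrt pi" using pi_gt3 by simp
  then have "1 \<le> Gamma (1/2::real) ^ k" using Gamma_one_half_real by (simp add: one_le_power)
  then have "Cg k \<le> Gamma (real k / 2)" unfolding Cg_def using g by (simp add: divide_le_eq)
  then show ?thesis using Gamma_half_bound[OF k] by simp
qed

lemma le_exp_self: "x \<le> exp (x::real)" using exp_ge_add_one_self[of x] by linarith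

lemma pow_le_exp: "real k ^ m \<le> exp (real k * real m)"
proof -
  have "real k ^ m \<le> exp (real k) ^ m" by (intro power_mono le_exp_self) auto
  also have "\<dots> = exp (real k * real m)" by (simp add: exp_of_nat_mult[symmetric] mult.commute)
  finally show ?thesis .
qed

lemma two_pow_le_exp: "(2::real) ^ m \<le> exp (real m)"
proof -
  have "(2::real) ^ m \<le> exp 1 ^ m" using exp_ge_add_one_self[of 1] by (intro power_mono) auto
  also have "\<dots> = exp (real m)" by (simp add: exp_of_nat_mult[symmetric])
  finally show ?thesis .
qed

lemma KT_upper_exp:
  assumes k: "k \<ge> 2" and adj: "adj_matrix n x" and nk: "n \<le> k"
  shows "KT k n x \<le> exp (5 * real (k*k))"
proof -
  have a: "real k ^ n \<le> exp (real (k*k))"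
  proof -
    have "real k ^ n \<le> real k ^ k" using k nk by (intro power_increasing) auto
    also have "\<dots> \<le> exp (real k * real k)" by (rule pow_le_exp)
    finally show ?thesis by simp
  qed
  have b: "Cg k \<le> exp (1 + real (k*k))"
  proof -
    have "Cg k \<le> 2 * real k ^ k" using Cg_bound k by simp
    also have "\<dots> \<le> exp 1 * exp (real k * real k)"
      using exp_ge_add_one_self[of 1] by (intro mult_mono pow_le_exp) auto
    finally show ?thesis by (simp add: exp_add)
  qed
  have c: "6 * 2 ^ (k - 2) \<le> exp (3 + real k)"
  proof -
    have "exp (3::real) = exp 2 * exp 1" by (simp flip: exp_add)
    also have "\<dots> \<ge> 4 * 2" using exp2_ge4 exp_ge_add_one_self[of 1] by (intro mult_mono) auto
    finally have e3: "6 \<le> exp (3::real)" by simp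
    have "(2::real) ^ (k - 2) \<le> 2 ^ k" by (intro power_increasing) auto
    also have "\<dots> \<le> exp (real k)" by (rule two_pow_le_exp)
    finally have "(2::real) ^ (k - 2) \<le> exp (real k)" .
    then have "6 * (2::real) ^ (k - 2) \<le> exp 3 * exp (real k)" using e3 by (intro mult_mono) auto
    then show ?thesis by (simp add: exp_add)
  qed
  have d: "(2::real) ^ card (upper_pairs k) \<le> exp (real (k*k))"
  proof -
    have "(2::real) ^ card (upper_pairs k) \<le> 2 ^ (k*k)" using card_upper_pairs by (intro power_increasing) auto
    also have "\<dots> \<le> exp (real (k*k))" by (rule two_pow_le_exp)
    finally show ?thesis .
  qed
  have c0: "0 \<le> Cg k" using Cg_nonneg k by simp
  have "KT k n x \<le> real k ^ n * Cg k * (6 * 2 ^ (k - 2)) * 2 ^ card (upper_pairs k)"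
    by (rule KT_upper[OF k adj])
  also have "\<dots> \<le> exp (real (k*k)) * exp (1 + real (k*k)) * exp (3 + real k) * exp (real (k*k))"
    using a b c d c0 by (intro mult_mono) auto
  also have "\<dots> = exp (3 * real (k*k) + real k + 4)" by (simp flip: exp_add add: algebra_simps)
  also have "\<dots> \<le> exp (5 * real (k*k))"
  proof -
    have "real k + 4 \<le> 2 * real (k*k)"
    proof -
      have "real k * 2 \<le> real k * real k" using k by (intro mult_left_mono) auto
      moreover have "4 \<le> real k * real k" using k mult_mono[of 2 "real k" 2 "real k"] by auto
      ultimately show ?thesis by simp
    qed
    then show ?thesis by simp
  qed
  finally show ?thesis .
qed

lemma KT_ln_upper:
  assumes k: "k \<ge> 2" and adj: "adj_matrix n x" and nk: "n \<le> k"
  shows "ln (KT k n x) \<le> 5 * real (k*k)"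
proof (cases "KT k n x > 0")
  case True
  then have "ln (KT k n x) \<le> ln (exp (5 * real (k*k)))"
    using KT_upper_exp[OF assms] by (subst ln_le_cancel_iff) auto
  then show ?thesis by simp
next
  case False
  have "KT k n x \<ge> 0" by (simp add: KT_def)
  then have "KT k n x = 0" using False by simp
  then show ?thesis by simp
qed

lemma pen_lower:
  assumes k: "k \<ge> 2" and n: "n \<ge> 1" and e: "\<epsilon> > 0"
  shows "pen \<epsilon> k n \<ge> real (k*k) / 2 * ln (real n)"
proof -
  have ln0: "ln (real n) \<ge> 0" using n by simp
  let ?t = "\<lambda>i. (real (i * (i + 2)) + 3 + \<epsilon>) / 2 * ln (real n)"
  have "?t (k-1) \<le> pen \<epsilon> k n"
    unfolding pen_def
    by (rule member_le_sum) (use k ln0 e in \<open>auto intro!: mult_nonneg_nonneg add_nonneg_nonneg\<close>)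
  moreover have "real (k*k) / 2 * ln (real n) \<le> ?t (k-1)"
  proof (intro mult_right_mono ln0)
    have "(k - 1) * (k - 1 + 2) + 1 = k * k" using k
      by (cases k) (auto simp: algebra_simps)
    then have "real ((k - 1) * (k - 1 + 2)) + 1 = real (k*k)" by (metis of_nat_1 of_nat_add)
    then have "real ((k - 1) * (k - 1 + 2)) = real (k*k) - 1" by linarith
    then show "real (k*k) / 2 \<le> (real ((k - 1) * (k - 1 + 2)) + 3 + \<epsilon>) / 2" using e by simp
  qed
  ultimately show ?thesis by linarith
qed

lemma det_part:
  assumes adj: "\<And>n. adj_matrix n (X n)" and e: "\<epsilon> > 0"
  shows "eventually (\<lambda>n. \<forall>k. is_khat_KT \<epsilon> n (X n) k \<longrightarrow> \<not> (k > n)) sequentially"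
proof -
  have "eventually (\<lambda>n. n \<ge> nat \<lceil>exp (20::real)\<rceil>) sequentially" by (rule eventually_ge_at_top)
  then show ?thesis
  proof (rule eventually_mono)
    fix n assume nN: "n \<ge> nat \<lceil>exp (20::real)\<rceil>"
    then have rn: "real n \<ge> exp 20" by linarith
    then have rn1: "real n \<ge> 1" using exp_ge_add_one_self[of 20] by linarith
    then have n1: "n \<ge> 1" by simp
    have ln20: "ln (real n) \<ge> 20"
    proof -
      have "ln (exp 20) \<le> ln (real n)" using rn rn1 by (subst ln_le_cancel_iff) auto
      then show ?thesis by simp
    qed
    show "\<forall>k. is_khat_KT \<epsilon> n (X n) k \<longrightarrow> \<not> (k > n)"
    proof (intro allI impI notI)
      fix k assume kh: "is_khat_KT \<epsilon> n (X n) k" and kn: "k > n"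
      have k2: "k \<ge> 2" using kn n1 by simp
      have c1: "KT_crit \<epsilon> n (X n) 1 \<ge> -4 * real (n*n) - 3"
        using KT1_ln[OF adj[of n]] by (simp add: KT_crit_def pen_def)
      have up: "ln (KT k n (X n)) \<le> 5 * real (k*k)"
        using KT_ln_upper[OF k2 adj[of n]] kn by simp
      have pl: "pen \<epsilon> k n \<ge> real (k*k) / 2 * ln (real n)" by (rule pen_lower[OF k2 n1 e])
      have "real (k*k) / 2 * 20 \<le> real (k*k) / 2 * ln (real n)"
        using ln20 by (intro mult_left_mono) auto
      then have pl2: "pen \<epsilon> k n \<ge> 10 * real (k*k)" using pl by simp
      have ck: "KT_crit \<epsilon> n (X n) k \<le> -5 * real (k*k)"
        using up pl2 by (simp add: KT_crit_def)
      have "real (n*n) + 1 \<le> real (k*k)"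
      proof -
        have "(n+1) * (n+1) \<le> k * k" using kn by (intro mult_le_mono) auto
        then have "n * n + 1 \<le> k * k" by simp
        then have "real (n * n + 1) \<le> real (k * k)" by (simp only: of_nat_le_iff)
        then show ?thesis by simp
      qed
      then have "KT_crit \<epsilon> n (X n) k < KT_crit \<epsilon> n (X n) 1" using ck c1 by linarith
      then show False using kh by (auto simp: is_khat_KT_def is_arg_max_def)
    qed
  qed
qed

theorem lemma3:
  fixes M :: "'w measure" and X :: "nat \<Rightarrow> 'w \<Rightarrow> nat \<Rightarrow> nat \<Rightarrow> bool"
    and k0 :: nat and \<pi>0 :: "nat \<Rightarrow> real" and P0 :: "nat \<Rightarrow> nat \<Rightarrow> real" and \<epsilon> :: real
  assumes "prob_space M"
    and "k0 \<ge> 1"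
    and "(\<pi>0, P0) \<in> Theta k0"
    and "sbm_order k0 \<pi>0 P0 = k0"
    and "\<epsilon> > 0"
    and "\<And>n x. adj_matrix n x \<Longrightarrow>
           {\<omega> \<in> space M. \<forall>i<n. \<forall>j<n. X n \<omega> i j = x i j} \<in> sets M \<and>
           measure M {\<omega> \<in> space M. \<forall>i<n. \<forall>j<n. X n \<omega> i j = x i j} = sbm_prob k0 \<pi>0 P0 n x"
  shows "AE \<omega> in M. eventually (\<lambda>n. \<forall>k. is_khat_KT \<epsilon> n (X n \<omega>) k \<longrightarrow> \<not> (k > n)) sequentially"
proof -
  have "AE \<omega> in M. \<forall>n. adj_matrix n (X n \<omega>)"
    by (rule adj_ae[OF assms(1,2,3,6)])
  then show ?thesis
    by (rule eventually_mono) (intro det_part[OF _ assms(5)], blast)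
qed

end
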